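(* For every predicate $P:\{0,1\}^K\to\{0,1\}$ and $x\in\{0,1\}^N$, there is a DNF formula $\psi_x$ over $\{0,1\}^{N\cdot K}$ with at most $2^K$ terms such that $P_x(z^S)=\psi_x(z^S)$ for every hyperedge $S$. Moreover, for any hyperedge $S$, at most one term of $\psi_x$ is satisfied by $z^S$. Furthermore, there exists a CNF formula $\phi_x$ over $\{0,1\}^{N\cdot K}$ with at most $2^K$ clauses such that $\phi_x(z^S)=\psi_x(z^S)$ for every hyperedge $S$.
   Context: A hyperedge is an ordered tuple $S=(i_1,\dots,i_K)$ of $K$ distinct elements of $[N]$; $x_S=(x_{i_1},\dots,x_{i_K})$. Its encoding $z^S\in\{0,1\}^{N\cdot K}$ is the concatenation of $K$ vectors in $\{0,1\}^N$, where the $j$-th vector has $0$ in component $i_j$ and $1$ elsewhere. For $z\in\{0,1\}^{N\cdot K}$, $z_{j,l}=z_{(j-1)N+l}$. $P_x:\{0,1\}^{N\cdot K}\to\{0,1\}$ is any function satisfying $P_x(z^S)=P(x_S)$ for every hyperedge $S$. *)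

theory Defs
  imports Main
begin

(* Bit vectors in {0,1}^n are bool lists of length n (True = 1), indexed from 0.
   A literal is a pair (i, b): it is satisfied by z iff z ! i = b
   (b = True: positive literal z_i; b = False: negated literal ~z_i). *)
type_synonym literal = "nat \<times> bool"

definition lit_sat :: "literal \<Rightarrow> bool list \<Rightarrow> bool" where
  "lit_sat l z = (z ! fst l = snd l)"

definition term_sat :: "literal list \<Rightarrow> bool list \<Rightarrow> bool" where
  "term_sat t z = (\<forall>l\<in>set t. lit_sat l z)"

definition clause_sat :: "literal list \<Rightarrow> bool list \<Rightarrow> bool" where
  "clause_sat c z = (\<exists>l\<in>set c. lit_sat l z)"

definition eval_dnf :: "literal list list \<Rightarrow> bool list \<Rightarrow> bool" where
  "eval_dnf \<psi> z = (\<exists>t\<in>set \<psi>. term_sat t z)"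

definition eval_cnf :: "literal list list \<Rightarrow> bool list \<Rightarrow> bool" where
  "eval_cnf \<phi> z = (\<forall>c\<in>set \<phi>. clause_sat c z)"

definition formula_over :: "nat \<Rightarrow> literal list list \<Rightarrow> bool" where
  "formula_over M F = (\<forall>t\<in>set F. \<forall>l\<in>set t. fst l < M)"

definition num_sat_terms :: "literal list list \<Rightarrow> bool list \<Rightarrow> nat" where
  "num_sat_terms \<psi> z = length (filter (\<lambda>t. term_sat t z) \<psi>)"

definition hyperedge :: "nat \<Rightarrow> nat \<Rightarrow> nat list \<Rightarrow> bool" where
  "hyperedge N K S = (length S = K \<and> distinct S \<and> set S \<subseteq> {..<N})"

(* Encoding z^S in {0,1}^(N*K): j-th block has 0 at position S!j, 1 elsewhere;
   so (encode N S) ! (j*N + l) = (l \<noteq> S ! j). *)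
definition encode :: "nat \<Rightarrow> nat list \<Rightarrow> bool list" where
  "encode N S = concat (map (\<lambda>i. map (\<lambda>l. l \<noteq> i) [0..<N]) S)"

definition restrict_to :: "bool list \<Rightarrow> nat list \<Rightarrow> bool list" where
  "restrict_to x S = map (\<lambda>i. x ! i) S"

end

theory Submission
  imports Defs
begin

primrec bls :: "nat \<Rightarrow> bool list list" where
  "bls 0 = [[]]"
| "bls (Suc n) = map (Cons True) (bls n) @ map (Cons False) (bls n)"

lemma bls_length: "length (bls n) = 2 ^ n"
  by (induct n) auto

lemma bls_set: "set (bls n) = {b. length b = n}"
proof (induct n)
  case 0 then show ?case by auto
next
  case (Suc n)
  show ?case
  proof (rule set_eqI)
    fix b :: "bool list"
    show "b \<in> set (bls (Suc n)) \<longleftrightarrow> b \<in> {b. length b = Suc n}"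
      using Suc by (cases b) auto
  qed
qed

lemma bls_distinct: "distinct (bls n)"
  by (induct n) (auto simp: distinct_map)

lemma encode_Cons: "encode N (i # S) = map (\<lambda>l. l \<noteq> i) [0..<N] @ encode N S"
  by (simp add: encode_def)

lemma encode_nth: "j < length S \<Longrightarrow> l < N \<Longrightarrow> encode N S ! (j * N + l) = (l \<noteq> S ! j)"
proof (induct S arbitrary: j)
  case Nil then show ?case by simp
next
  case (Cons i S)
  show ?case
  proof (cases j)
    case 0 then show ?thesis using Cons by (simp add: encode_Cons nth_append)
  next
    case (Suc j')
    then show ?thesis using Cons by (simp add: encode_Cons nth_append)
  qed
qed

lemma idx_bound: "j < K \<Longrightarrow> l < (N::nat) \<Longrightarrow> j * N + l < N * K"
proof -
  assume a: "j < K" "l < N"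
  have "j * N + l < j * N + N" using a by simp
  also have "\<dots> = Suc j * N" by simp
  also have "\<dots> \<le> K * N" using a by (intro mult_le_mono1) simp
  finally show ?thesis by (simp add: mult.commute)
qed

definition tm :: "nat \<Rightarrow> nat \<Rightarrow> bool list \<Rightarrow> bool \<Rightarrow> bool list \<Rightarrow> literal list" where
  "tm N K x s b = concat (map (\<lambda>j. map (\<lambda>l. (j * N + l, s)) (filter (\<lambda>l. x ! l \<noteq> b ! j) [0..<N])) [0..<K])"

lemma tm_set: "set (tm N K x s b) = {(j * N + l, s) | j l. j < K \<and> l < N \<and> x ! l \<noteq> b ! j}"
  unfolding tm_def by (auto; blast)

lemma tm_over: "(i, s') \<in> set (tm N K x s b) \<Longrightarrow> i < N * K \<and> s' = s"
  unfolding tm_set using idx_bound by blast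

lemma key:
  assumes H: "hyperedge N K S" and lb: "length b = K" and lx: "length x = N"
  shows "term_sat (tm N K x True b) (encode N S) \<longleftrightarrow> b = restrict_to x S"
proof -
  have lS: "length S = K" and SN: "\<And>j. j < K \<Longrightarrow> S ! j < N"
    using H unfolding hyperedge_def by (auto, metis lessThan_iff nth_mem subsetD)
  have "term_sat (tm N K x True b) (encode N S) \<longleftrightarrow>
        (\<forall>j<K. \<forall>l<N. x ! l \<noteq> b ! j \<longrightarrow> l \<noteq> S ! j)"
  proof -
    have "term_sat (tm N K x True b) (encode N S) \<longleftrightarrow>
        (\<forall>j<K. \<forall>l<N. x ! l \<noteq> b ! j \<longrightarrow> encode N S ! (j * N + l))"
      unfolding term_sat_def lit_sat_def tm_set by auto
    also have "\<dots> \<longleftrightarrow> (\<forall>j<K. \<forall>l<N. x ! l \<noteq> b ! j \<longrightarrow> l \<noteq> S ! j)"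
      using encode_nth lS by simp
    finally show ?thesis .
  qed
  also have "\<dots> \<longleftrightarrow> (\<forall>j<K. x ! (S ! j) = b ! j)"
    using SN by blast
  also have "\<dots> \<longleftrightarrow> b = restrict_to x S"
    unfolding restrict_to_def using lS lb by (auto simp: list_eq_iff_nth_eq)
  finally show ?thesis .
qed

lemma key2:
  assumes H: "hyperedge N K S" and lb: "length b = K" and lx: "length x = N"
  shows "clause_sat (tm N K x False b) (encode N S) \<longleftrightarrow> \<not> term_sat (tm N K x True b) (encode N S)"
  unfolding term_sat_def clause_sat_def lit_sat_def tm_set by auto

theorem lemma8p4:
  fixes N K :: nat and P :: "bool list \<Rightarrow> bool" and x :: "bool list"
  assumes "length x = N"
  shows "\<exists>\<psi>. formula_over (N * K) \<psi> \<and> length \<psi> \<le> 2 ^ K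
      \<and> (\<forall>Px :: bool list \<Rightarrow> bool.
            (\<forall>S. hyperedge N K S \<longrightarrow> Px (encode N S) = P (restrict_to x S)) \<longrightarrow>
            (\<forall>S. hyperedge N K S \<longrightarrow> Px (encode N S) = eval_dnf \<psi> (encode N S)))
      \<and> (\<forall>S. hyperedge N K S \<longrightarrow> num_sat_terms \<psi> (encode N S) \<le> 1)
      \<and> (\<exists>\<phi>. formula_over (N * K) \<phi> \<and> length \<phi> \<le> 2 ^ K
            \<and> (\<forall>S. hyperedge N K S \<longrightarrow> eval_cnf \<phi> (encode N S) = eval_dnf \<psi> (encode N S)))"
proof -
  define B where "B = filter P (bls K)"
  define C where "C = filter (\<lambda>b. \<not> P b) (bls K)"
  define \<psi> where "\<psi> = map (tm N K x True) B"
  define \<phi> where "\<phi> = map (tm N K x False) C"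
  have lenB: "\<And>b. b \<in> set B \<Longrightarrow> length b = K" and lenC: "\<And>b. b \<in> set C \<Longrightarrow> length b = K"
    unfolding B_def C_def using bls_set by auto
  have f1: "formula_over (N * K) \<psi>"
    unfolding formula_over_def \<psi>_def using tm_over by fastforce
  have f2: "formula_over (N * K) \<phi>"
    unfolding formula_over_def \<phi>_def using tm_over by fastforce
  have l1: "length \<psi> \<le> 2 ^ K"
    unfolding \<psi>_def B_def using bls_length length_filter_le by (metis length_map)
  have l2: "length \<phi> \<le> 2 ^ K"
    unfolding \<phi>_def C_def using bls_length length_filter_le by (metis length_map)
  have ev: "eval_dnf \<psi> (encode N S) = P (restrict_to x S)" if H: "hyperedge N K S" for S
  proof -
    have lr: "length (restrict_to x S) = K" using H unfolding hyperedge_def restrict_to_def by simp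
    have "eval_dnf \<psi> (encode N S) \<longleftrightarrow> (\<exists>b\<in>set B. b = restrict_to x S)"
      unfolding eval_dnf_def \<psi>_def using key[OF H _ assms] lenB by auto
    also have "\<dots> \<longleftrightarrow> P (restrict_to x S)" unfolding B_def using bls_set lr by auto
    finally show ?thesis .
  qed
  have evc: "eval_cnf \<phi> (encode N S) = P (restrict_to x S)" if H: "hyperedge N K S" for S
  proof -
    have lr: "length (restrict_to x S) = K" using H unfolding hyperedge_def restrict_to_def by simp
    have "eval_cnf \<phi> (encode N S) \<longleftrightarrow> (\<forall>b\<in>set C. b \<noteq> restrict_to x S)"
      unfolding eval_cnf_def \<phi>_def using key[OF H _ assms] key2[OF H _ assms] lenC by auto
    also have "\<dots> \<longleftrightarrow> P (restrict_to x S)" unfolding C_def using bls_set lr by auto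
    finally show ?thesis .
  qed
  have ns: "num_sat_terms \<psi> (encode N S) \<le> 1" if H: "hyperedge N K S" for S
  proof -
    have dB: "distinct B" unfolding B_def using bls_distinct by simp
    have "filter (\<lambda>t. term_sat t (encode N S)) \<psi>
          = map (tm N K x True) (filter (\<lambda>b. b = restrict_to x S) B)"
      unfolding \<psi>_def filter_map comp_def
      using key[OF H _ assms] lenB by (intro arg_cong[where f="map _"] filter_cong) auto
    moreover have "length (filter (\<lambda>b. b = restrict_to x S) B) \<le> 1"
    proof -
      have "length (filter (\<lambda>b. b = restrict_to x S) B) = card ({b. b = restrict_to x S} \<inter> set B)"
        using dB by (rule distinct_length_filter)
      also have "\<dots> \<le> card {restrict_to x S}" by (intro card_mono) auto
      finally show ?thesis by simp
    qed
    ultimately show ?thesis unfolding num_sat_terms_def by simp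
  qed
  show ?thesis
  proof (rule exI[of _ \<psi>], intro conjI f1 l1 allI impI ns)
    fix Px :: "bool list \<Rightarrow> bool" and S
    assume "\<forall>S. hyperedge N K S \<longrightarrow> Px (encode N S) = P (restrict_to x S)" "hyperedge N K S"
    then show "Px (encode N S) = eval_dnf \<psi> (encode N S)" using ev by simp
  next
    show "\<exists>\<phi>. formula_over (N * K) \<phi> \<and> length \<phi> \<le> 2 ^ K
            \<and> (\<forall>S. hyperedge N K S \<longrightarrow> eval_cnf \<phi> (encode N S) = eval_dnf \<psi> (encode N S))"
      using f2 l2 ev evc by (intro exI[of _ \<phi>]) simp
  qed
qed

end
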